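(* Let $X$ be a compact, complete, separable metric space and let $\mathcal{P}(X)$ be the space of Borel probability measures on $X$ with the topology of weak convergence. Let $J:\mathcal{P}(X)\to\mathbb{R}$ be continuously differentiable in the sense that for every $\mu\in\mathcal{P}(X)$ an influence function $\Psi_\mu$ of $J$ at $\mu$ exists and the map $(\mu,\nu)\mapsto \mathbb{E}_{x\sim\nu}[\Psi_\mu(x)]$ is continuous. Let $\theta\mapsto\mu_\theta\in\mathcal{P}(X)$ (with $\theta$ in a Euclidean space) be differentiable in the sense that $\frac{1}{\|h\|}(\mu_{\theta+h}-\mu_\theta)$ converges to a weak limit as $h\to 0$. Then \[ \nabla_\theta J(\mu_\theta)=\nabla_\theta\, \mathbb{E}_{x\sim\mu_\theta}[\hat\Psi(x)], \] where $\hat\Psi=\Psi_{\mu_\theta}$ is treated as a fixed function $X\to\mathbb{R}$ not depending on $\theta$ (i.e. the gradient on the right acts only through $\mu_\theta$).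
   Context: For $J:\mathcal{P}(X)\to\mathbb{R}$ and $\mu\in\mathcal{P}(X)$, the Gâteaux differential in direction $\chi=\nu-\mu$ ($\nu\in\mathcal{P}(X)$) is $dJ_\mu(\chi)=\lim_{\epsilon\to0^+}\frac{J(\mu+\epsilon\chi)-J(\mu)}{\epsilon}$. A function $\Psi_\mu:X\to\mathbb{R}$ is an influence function for $J$ at $\mu$ if $dJ_\mu(\chi)=\int_X\Psi_\mu(x)\,\chi(dx)$ for all $\chi=\nu-\mu$ with $\nu\in\mathcal{P}(X)$. *)

theory Defs
  imports "HOL-Probability.Probability"
begin

definition prob_measures :: "'a::metric_space measure set" where
  "prob_measures = {M. sets M = sets (borel :: 'a measure) \<and> prob_space M}"

definition weak_topology :: "'a::metric_space measure topology" where
  "weak_topology = topology_generated_by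
     {{M \<in> prob_measures. (\<integral>x. f x \<partial>M) \<in> U} | (f :: 'a \<Rightarrow> real) U.
        continuous_on UNIV f \<and> bounded (range f) \<and> open U}"

text \<open>The mixture mu + eps (nu - mu) = (1 - eps) mu + eps nu.\<close>
definition mix :: "real \<Rightarrow> 'a measure \<Rightarrow> 'a measure \<Rightarrow> 'a measure" where
  "mix e \<mu> \<nu> = measure_of (space \<mu>) (sets \<mu>)
      (\<lambda>A. ennreal (1 - e) * emeasure \<mu> A + ennreal e * emeasure \<nu> A)"

text \<open>Psi is an influence function of J at mu: for every nu in P(X) the Gateaux differential
  in direction chi = nu - mu exists and equals the integral of Psi against chi.\<close>
definition influence_function ::
    "('a::metric_space measure \<Rightarrow> real) \<Rightarrow> 'a measure \<Rightarrow> ('a \<Rightarrow> real) \<Rightarrow> bool" where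
  "influence_function J \<mu> \<Psi> \<longleftrightarrow>
     (\<forall>\<nu> \<in> prob_measures. integrable \<nu> \<Psi> \<and> integrable \<mu> \<Psi> \<and>
        ((\<lambda>e. (J (mix e \<mu> \<nu>) - J \<mu>) / e) \<longlongrightarrow>
           ((\<integral>x. \<Psi> x \<partial>\<nu>) - (\<integral>x. \<Psi> x \<partial>\<mu>))) (at_right 0))"

text \<open>theta \<mapsto> mu theta is (weakly) differentiable at theta: there is a linear map
  h \<mapsto> sum_b (h\<bullet>b) lambda_b into finite signed Borel measures (lambda_b = P b - N b) such that
  (mu(theta+h) - mu theta - L h) / norm h tends weakly to 0 as h \<rightarrow> 0.\<close>
definition weakly_differentiable_at ::
    "('b::euclidean_space \<Rightarrow> 'a::metric_space measure) \<Rightarrow> 'b \<Rightarrow> bool" where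
  "weakly_differentiable_at \<mu> \<theta> \<longleftrightarrow>
     (\<exists>P N :: 'b \<Rightarrow> 'a measure.
        (\<forall>b\<in>Basis. finite_measure (P b) \<and> sets (P b) = sets borel \<and>
                    finite_measure (N b) \<and> sets (N b) = sets borel) \<and>
        (\<forall>f :: 'a \<Rightarrow> real. continuous_on UNIV f \<and> bounded (range f) \<longrightarrow>
           ((\<lambda>h. ((\<integral>x. f x \<partial>\<mu> (\<theta> + h)) - (\<integral>x. f x \<partial>\<mu> \<theta>)
                   - (\<Sum>b\<in>Basis. (h \<bullet> b) * ((\<integral>x. f x \<partial>P b) - (\<integral>x. f x \<partial>N b)))) / norm h)
             \<longlongrightarrow> 0) (at 0)))"

end

theory Submission
  imports Defs
begin
lemma sigma_borel: "sigma_sets UNIV (sets (borel::'a::topological_space measure)) = sets borel"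
  using sets.sigma_sets_eq[of "borel::'a measure"] by simp

lemma prob_measuresD:
  assumes "M \<in> prob_measures"
  shows "sets M = sets borel" "space M = UNIV" "prob_space M"
  using assms unfolding prob_measures_def by (auto dest: sets_eq_imp_space_eq)

lemma emeasure_mix:
  assumes M: "M \<in> prob_measures" and N: "N \<in> prob_measures" and e: "0 \<le> e" "e \<le> 1"
    and A: "A \<in> sets borel"
  shows "emeasure (mix e M N) A = ennreal (1 - e) * emeasure M A + ennreal e * emeasure N A"
proof -
  note MD = prob_measuresD[OF M] and ND = prob_measuresD[OF N]
  show ?thesis
  proof (rule emeasure_measure_of[OF mix_def])
    show "sets M \<subseteq> Pow (space M)" by (rule sets.space_closed)
    show "A \<in> sets (mix e M N)"
      using A MD unfolding mix_def by (simp add: sigma_borel)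
    show "positive (sets (mix e M N)) (\<lambda>A. ennreal (1 - e) * emeasure M A + ennreal e * emeasure N A)"
      by (simp add: positive_def)
    show "countably_additive (sets (mix e M N)) (\<lambda>A. ennreal (1 - e) * emeasure M A + ennreal e * emeasure N A)"
    proof (rule countably_additiveI)
      fix F :: "nat \<Rightarrow> 'a set"
      assume F: "range F \<subseteq> sets (mix e M N)" "disjoint_family F"
      then have FM: "range F \<subseteq> sets M" and FN: "range F \<subseteq> sets N"
        using MD ND unfolding mix_def by (auto simp: sigma_borel)
      have "(\<Sum>i. ennreal (1 - e) * emeasure M (F i) + ennreal e * emeasure N (F i))
         = (\<Sum>i. ennreal (1 - e) * emeasure M (F i)) + (\<Sum>i. ennreal e * emeasure N (F i))"
        by (rule suminf_add[symmetric]) auto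
      also have "\<dots> = ennreal (1 - e) * emeasure M (\<Union>i. F i) + ennreal e * emeasure N (\<Union>i. F i)"
        using suminf_emeasure[OF FM F(2)] suminf_emeasure[OF FN F(2)]
        by (simp add: ennreal_suminf_cmult)
      finally show "(\<Sum>i. ennreal (1 - e) * emeasure M (F i) + ennreal e * emeasure N (F i))
         = ennreal (1 - e) * emeasure M (\<Union>i. F i) + ennreal e * emeasure N (\<Union>i. F i)" .
    qed
  qed
qed

lemma sets_mix: "M \<in> prob_measures \<Longrightarrow> sets (mix e M N) = sets borel"
  using prob_measuresD[of M] unfolding mix_def by (simp add: sigma_borel)

lemma mix_in:
  assumes M: "M \<in> prob_measures" and N: "N \<in> prob_measures" and e: "0 \<le> e" "e \<le> 1"
  shows "mix e M N \<in> prob_measures"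
proof -
  have sp: "space (mix e M N) = UNIV"
    using sets_mix[OF M] sets_eq_imp_space_eq by fastforce
  have "emeasure (mix e M N) (space (mix e M N)) = 1"
  proof -
    have "emeasure M UNIV = 1" "emeasure N UNIV = 1"
      using prob_space.emeasure_space_1 prob_measuresD[OF M] prob_measuresD[OF N] by metis+
    then show ?thesis
      using emeasure_mix[OF assms, of UNIV] sp e
      by (simp add: ennreal_plus[symmetric] del: ennreal_plus)
  qed
  then show ?thesis
    unfolding prob_measures_def using sets_mix[OF M] by (auto intro: prob_spaceI)
qed

lemma mix_eqI:
  assumes "M \<in> prob_measures" "M' \<in> prob_measures"
    and "\<And>A. A \<in> sets borel \<Longrightarrow> emeasure M A = emeasure M' A"
  shows "M = M'"
  using assms by (intro measure_eqI) (auto simp: prob_measures_def)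

lemma nn_integral_mix:
  assumes M: "M \<in> prob_measures" and N: "N \<in> prob_measures" and e: "0 \<le> e" "e \<le> 1"
    and u: "u \<in> borel_measurable borel"
  shows "(\<integral>\<^sup>+x. u x \<partial>mix e M N) = ennreal (1 - e) * (\<integral>\<^sup>+x. u x \<partial>M) + ennreal e * (\<integral>\<^sup>+x. u x \<partial>N)"
  using u
proof (induction rule: borel_measurable_induct)
  case (cong f g)
  have "\<And>K. sets K = sets borel \<Longrightarrow> (\<integral>\<^sup>+x. f x \<partial>K) = (\<integral>\<^sup>+x. g x \<partial>K)"
    using cong(3) by (intro nn_integral_cong) (auto dest: sets_eq_imp_space_eq)
  then show ?case using cong(4) sets_mix[OF M] prob_measuresD[OF M] prob_measuresD[OF N] by metis
next
  case (set A)
  have "(\<integral>\<^sup>+x. indicator A x \<partial>mix e M N) = emeasure (mix e M N) A"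
    using set sets_mix[OF M] by (intro nn_integral_indicator) auto
  moreover have "(\<integral>\<^sup>+x. indicator A x \<partial>M) = emeasure M A" "(\<integral>\<^sup>+x. indicator A x \<partial>N) = emeasure N A"
    using set prob_measuresD[OF M] prob_measuresD[OF N] by (intro nn_integral_indicator; auto)+
  ultimately show ?case using emeasure_mix[OF M N e set] by simp
next
  case (mult u c)
  have m: "\<And>K. sets K = sets borel \<Longrightarrow> u \<in> borel_measurable K"
    using mult(2) measurable_cong_sets by blast
  have "\<And>K. sets K = sets borel \<Longrightarrow> (\<integral>\<^sup>+x. c * u x \<partial>K) = c * (\<integral>\<^sup>+x. u x \<partial>K)"
    using m by (intro nn_integral_cmult) auto
  then show ?case using mult(4) sets_mix[OF M] prob_measuresD[OF M] prob_measuresD[OF N]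
    by (simp add: algebra_simps)
next
  case (add u v)
  have m: "\<And>K. sets K = sets borel \<Longrightarrow> u \<in> borel_measurable K \<and> v \<in> borel_measurable K"
    using add measurable_cong_sets by blast
  have "\<And>K. sets K = sets borel \<Longrightarrow> (\<integral>\<^sup>+x. v x + u x \<partial>K) = (\<integral>\<^sup>+x. v x \<partial>K) + (\<integral>\<^sup>+x. u x \<partial>K)"
    using m by (intro nn_integral_add) auto
  moreover note add
  ultimately show ?case using sets_mix[OF M] prob_measuresD[OF M] prob_measuresD[OF N]
    by (simp add: algebra_simps)
next
  case (seq U)
  have m: "\<And>K i. sets K = sets borel \<Longrightarrow> U i \<in> borel_measurable K"
    using seq measurable_cong_sets by blast
  have conv: "\<And>K. sets K = sets borel \<Longrightarrow> (\<integral>\<^sup>+x. (SUP i. U i) x \<partial>K) = (SUP i. \<integral>\<^sup>+x. U i x \<partial>K)"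
    unfolding SUP_apply using m \<open>incseq U\<close> by (intro nn_integral_monotone_convergence_SUP) auto
  have inc: "\<And>K. incseq (\<lambda>i. \<integral>\<^sup>+x. U i x \<partial>K)"
    using \<open>incseq U\<close> unfolding incseq_def by (auto intro!: nn_integral_mono simp: le_fun_def)
  have "(\<integral>\<^sup>+x. (SUP i. U i) x \<partial>mix e M N) = (SUP i. \<integral>\<^sup>+x. U i x \<partial>mix e M N)"
    using conv sets_mix[OF M] by blast
  also have "\<dots> = (SUP i. ennreal (1 - e) * (\<integral>\<^sup>+x. U i x \<partial>M) + ennreal e * (\<integral>\<^sup>+x. U i x \<partial>N))"
    using seq by simp
  also have "\<dots> = (SUP i. ennreal (1 - e) * (\<integral>\<^sup>+x. U i x \<partial>M)) + (SUP i. ennreal e * (\<integral>\<^sup>+x. U i x \<partial>N))"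
    by (rule ennreal_SUP_add) (use inc in \<open>auto simp: incseq_def intro: mult_left_mono\<close>)
  also have "\<dots> = ennreal (1 - e) * (SUP i. (\<integral>\<^sup>+x. U i x \<partial>M)) + ennreal e * (SUP i. (\<integral>\<^sup>+x. U i x \<partial>N))"
    by (simp add: SUP_mult_left_ennreal)
  also have "\<dots> = ennreal (1 - e) * (\<integral>\<^sup>+x. (SUP i. U i) x \<partial>M) + ennreal e * (\<integral>\<^sup>+x. (SUP i. U i) x \<partial>N)"
    using conv prob_measuresD[OF M] prob_measuresD[OF N] by metis
  finally show ?case .
qed

lemma integral_mix:
  fixes f :: "'a::metric_space \<Rightarrow> real"
  assumes M: "M \<in> prob_measures" and N: "N \<in> prob_measures" and e: "0 \<le> e" "e \<le> 1"
    and f: "f \<in> borel_measurable borel" and B: "\<And>x. \<bar>f x\<bar> \<le> B"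
  shows "integrable (mix e M N) f"
    and "(\<integral>x. f x \<partial>mix e M N) = (1 - e) * (\<integral>x. f x \<partial>M) + e * (\<integral>x. f x \<partial>N)"
proof -
  have P: "\<And>K. K \<in> prob_measures \<Longrightarrow> integrable K f \<and> (\<integral>\<^sup>+x. ennreal (f x) \<partial>K) < top
     \<and> (\<integral>\<^sup>+x. ennreal (- f x) \<partial>K) < top"
  proof -
    fix K :: "'a measure" assume K: "K \<in> prob_measures"
    note KD = prob_measuresD[OF K]
    interpret prob_space K by (rule KD(3))
    have fm: "f \<in> borel_measurable K" using f KD measurable_cong_sets by blast
    have "integrable K f"
      by (rule integrable_const_bound[where B=B]) (use fm B in auto)
    moreover have "(\<integral>\<^sup>+x. ennreal (f x) \<partial>K) \<le> (\<integral>\<^sup>+x. ennreal B \<partial>K)"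
      using B by (intro nn_integral_mono) (auto intro: ennreal_leI abs_le_D1)
    moreover have "(\<integral>\<^sup>+x. ennreal (- f x) \<partial>K) \<le> (\<integral>\<^sup>+x. ennreal B \<partial>K)"
      using B by (intro nn_integral_mono) (auto intro: ennreal_leI abs_le_D2)
    moreover have "(\<integral>\<^sup>+x. ennreal B \<partial>K) < top"
      by (simp add: emeasure_space_1)
    ultimately show "integrable K f \<and> (\<integral>\<^sup>+x. ennreal (f x) \<partial>K) < top
     \<and> (\<integral>\<^sup>+x. ennreal (- f x) \<partial>K) < top" by auto
  qed
  have Mx: "mix e M N \<in> prob_measures" by (rule mix_in[OF M N e])
  show "integrable (mix e M N) f" using P[OF Mx] by blast
  have fm2: "(\<lambda>x. ennreal (f x)) \<in> borel_measurable borel" "(\<lambda>x. ennreal (- f x)) \<in> borel_measurable borel"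
    using f by auto
  have "(\<integral>x. f x \<partial>mix e M N) = enn2real (\<integral>\<^sup>+x. ennreal (f x) \<partial>mix e M N) - enn2real (\<integral>\<^sup>+x. ennreal (- f x) \<partial>mix e M N)"
    using P[OF Mx] by (intro real_lebesgue_integral_def) blast
  also have "\<dots> = (1 - e) * (enn2real (\<integral>\<^sup>+x. ennreal (f x) \<partial>M) - enn2real (\<integral>\<^sup>+x. ennreal (- f x) \<partial>M))
     + e * (enn2real (\<integral>\<^sup>+x. ennreal (f x) \<partial>N) - enn2real (\<integral>\<^sup>+x. ennreal (- f x) \<partial>N))"
    unfolding nn_integral_mix[OF M N e fm2(1)] nn_integral_mix[OF M N e fm2(2)]
    using P[OF M] P[OF N] e
    by (simp add: enn2real_plus ennreal_mult_less_top enn2real_mult algebra_simps)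
  also have "\<dots> = (1 - e) * (\<integral>x. f x \<partial>M) + e * (\<integral>x. f x \<partial>N)"
    using P[OF M] P[OF N] by (simp add: real_lebesgue_integral_def)
  finally show "(\<integral>x. f x \<partial>mix e M N) = (1 - e) * (\<integral>x. f x \<partial>M) + e * (\<integral>x. f x \<partial>N)" .
qed

lemma measure_mix:
  assumes M: "M \<in> prob_measures" and N: "N \<in> prob_measures" and e: "0 \<le> e" "e \<le> 1"
    and A: "A \<in> sets borel"
  shows "measure (mix e M N) A = (1 - e) * measure M A + e * measure N A"
proof -
  interpret pM: prob_space M using prob_measuresD[OF M] by blast
  interpret pN: prob_space N using prob_measuresD[OF N] by blast
  have "emeasure (mix e M N) A = ennreal ((1 - e) * measure M A + e * measure N A)"
  proof -
    have "emeasure (mix e M N) A = ennreal ((1 - e) * measure M A) + ennreal (e * measure N A)"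
      using emeasure_mix[OF assms] e
      by (simp add: pM.emeasure_eq_measure pN.emeasure_eq_measure ennreal_mult)
    also have "\<dots> = ennreal ((1 - e) * measure M A + e * measure N A)"
      using e by (intro ennreal_plus[symmetric]) auto
    finally show ?thesis .
  qed
  then show ?thesis
    using e by (intro measure_eq_emeasure_eq_ennreal) auto
qed

lemma mix_eqI':
  assumes "M \<in> prob_measures" "M' \<in> prob_measures"
    and "\<And>A. A \<in> sets borel \<Longrightarrow> measure M A = measure M' A"
  shows "M = M'"
proof (rule mix_eqI[OF assms(1,2)])
  fix A :: "'a set" assume A: "A \<in> sets borel"
  interpret pM: prob_space M using prob_measuresD[OF assms(1)] by blast
  interpret pN: prob_space M' using prob_measuresD[OF assms(2)] by blast
  show "emeasure M A = emeasure M' A"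
    using assms(3)[OF A] by (simp add: pM.emeasure_eq_measure pN.emeasure_eq_measure)
qed

lemma mix_0: "M \<in> prob_measures \<Longrightarrow> N \<in> prob_measures \<Longrightarrow> mix 0 M N = M"
  by (rule mix_eqI') (auto simp: measure_mix mix_in)

lemma mix_1: "M \<in> prob_measures \<Longrightarrow> N \<in> prob_measures \<Longrightarrow> mix 1 M N = N"
  by (rule mix_eqI') (auto simp: measure_mix mix_in)

lemma mix_mix_right:
  assumes M: "M \<in> prob_measures" and N: "N \<in> prob_measures" and e: "0 \<le> e" "e \<le> 1"
    and s: "0 \<le> s" "s \<le> 1"
  shows "mix s (mix e M N) N = mix (e + s * (1 - e)) M N"
proof -
  have "e + s * (1 - e) \<le> 1"
    using e s mult_left_le_one_le[of "1-e" s] by (simp add: algebra_simps)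
  moreover have "0 \<le> e + s * (1 - e)" using e s by simp
  moreover have K: "mix e M N \<in> prob_measures" using mix_in[OF M N e] .
  ultimately show ?thesis
  proof (intro mix_eqI' mix_in[OF K N s] mix_in[OF M N])
    fix A :: "'a set" assume A: "A \<in> sets borel"
    show "measure (mix s (mix e M N) N) A = measure (mix (e + s * (1 - e)) M N) A"
      unfolding measure_mix[OF K N s A] measure_mix[OF M N e A]
        measure_mix[OF M N \<open>0 \<le> e + s * (1 - e)\<close> \<open>e + s * (1 - e) \<le> 1\<close> A]
      by (simp add: algebra_simps)
  qed
qed

lemma mix_mix_left:
  assumes M: "M \<in> prob_measures" and N: "N \<in> prob_measures" and e: "0 \<le> e" "e \<le> 1"
    and s: "0 \<le> s" "s \<le> 1"
  shows "mix s (mix e M N) M = mix (e - s * e) M N"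
proof -
  have "s * e \<le> e" using e s by (simp add: mult_left_le_one_le)
  moreover have "0 \<le> e - s * e" using calculation by simp
  moreover have K: "mix e M N \<in> prob_measures" using mix_in[OF M N e] .
  moreover have "e - s * e \<le> 1" using e s by (smt (verit) mult_nonneg_nonneg)
  ultimately show ?thesis
  proof (intro mix_eqI' mix_in[OF K M s] mix_in[OF M N])
    fix A :: "'a set" assume A: "A \<in> sets borel"
    show "measure (mix s (mix e M N) M) A = measure (mix (e - s * e) M N) A"
      unfolding measure_mix[OF K M s A] measure_mix[OF M N e A]
        measure_mix[OF M N \<open>0 \<le> e - s * e\<close> \<open>e - s * e \<le> 1\<close> A]
      by (simp add: algebra_simps)
  qed
qed

lemma at_left_as_right: "at_left (a::real) = filtermap (\<lambda>t. a - t) (at_right 0)"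
  by (simp add: at_left_minus[of a] at_right_to_0[of "-a"] filtermap_filtermap)

lemma filterlim_scale_at_right:
  assumes "(c::real) > 0"
  shows "filterlim (\<lambda>t. t / c) (at_right 0) (at_right 0)"
  unfolding filterlim_at
proof
  show "\<forall>\<^sub>F x in at_right 0. x / c \<in> {0<..} \<and> x / c \<noteq> 0"
    using eventually_at_right_real[OF zero_less_one] by eventually_elim (use assms in \<open>auto simp: divide_pos_pos\<close>)
  show "((\<lambda>t. t / c) \<longlongrightarrow> 0) (at_right 0)"
    by (rule tendsto_divide_zero[OF tendsto_ident_at])
qed

lemma right_deriv:
  fixes J :: "'a::metric_space measure \<Rightarrow> real"
  assumes infl: "\<And>K. K \<in> prob_measures \<Longrightarrow> influence_function J K (\<Psi> K)"
    and psi: "\<And>K. K \<in> prob_measures \<Longrightarrow> \<Psi> K \<in> borel_measurable borel"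
    and bnd: "\<And>K. K \<in> prob_measures \<Longrightarrow> \<exists>B. \<forall>x. \<bar>\<Psi> K x\<bar> \<le> B"
    and M: "M \<in> prob_measures" and N: "N \<in> prob_measures" and e: "0 \<le> e" "e < 1"
  shows "((\<lambda>t. (J (mix (e + t) M N) - J (mix e M N)) / t) \<longlongrightarrow>
           (\<integral>x. \<Psi> (mix e M N) x \<partial>N) - (\<integral>x. \<Psi> (mix e M N) x \<partial>M)) (at_right 0)"
proof -
  define K where "K = mix e M N"
  have e1: "e \<le> 1" using e by simp
  have hK: "K \<in> prob_measures" unfolding K_def using mix_in[OF M N e(1) e1] .
  have L1: "((\<lambda>s. (J (mix s K N) - J K) / s) \<longlongrightarrow> (\<integral>x. \<Psi> K x \<partial>N) - (\<integral>x. \<Psi> K x \<partial>K)) (at_right 0)"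
    using infl[OF hK] N unfolding influence_function_def by blast
  obtain B where B: "\<And>x. \<bar>\<Psi> K x\<bar> \<le> B" using bnd[OF hK] by blast
  have FKK: "(\<integral>x. \<Psi> K x \<partial>K) = (1 - e) * (\<integral>x. \<Psi> K x \<partial>M) + e * (\<integral>x. \<Psi> K x \<partial>N)"
    unfolding K_def using integral_mix(2)[OF M N e(1) e1 psi[OF hK[unfolded K_def]] B[unfolded K_def]]
    by (simp add: K_def)
  have c: "1 - e > 0" using e by simp
  have L2: "((\<lambda>t. (J (mix (t / (1 - e)) K N) - J K) / (t / (1 - e))) \<longlongrightarrow> (\<integral>x. \<Psi> K x \<partial>N) - (\<integral>x. \<Psi> K x \<partial>K)) (at_right 0)"
    using filterlim_compose[OF L1 filterlim_scale_at_right[OF c]] by simp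
  have L3: "((\<lambda>t. ((J (mix (t / (1 - e)) K N) - J K) / (t / (1 - e))) / (1 - e)) \<longlongrightarrow>
      ((\<integral>x. \<Psi> K x \<partial>N) - (\<integral>x. \<Psi> K x \<partial>K)) / (1 - e)) (at_right 0)"
    using c by (intro tendsto_divide L2) auto
  have eq: "((\<integral>x. \<Psi> K x \<partial>N) - (\<integral>x. \<Psi> K x \<partial>K)) / (1 - e) = (\<integral>x. \<Psi> K x \<partial>N) - (\<integral>x. \<Psi> K x \<partial>M)"
    using c unfolding FKK by (simp add: field_simps)
  have ev: "\<forall>\<^sub>F t in at_right 0. ((J (mix (t / (1 - e)) K N) - J K) / (t / (1 - e))) / (1 - e)
        = (J (mix (e + t) M N) - J K) / t"
    using eventually_at_right_real[OF c]
  proof eventually_elim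
    case (elim t)
    then have s: "0 \<le> t / (1 - e)" "t / (1 - e) \<le> 1" using c by auto
    have "mix (t / (1 - e)) K N = mix (e + t / (1 - e) * (1 - e)) M N"
      unfolding K_def by (rule mix_mix_right[OF M N e(1) e1 s])
    also have "e + t / (1 - e) * (1 - e) = e + t" using c by simp
    finally show ?case using c elim by (simp add: field_simps)
  qed
  have "((\<lambda>t. (J (mix (e + t) M N) - J K) / t) \<longlongrightarrow> (\<integral>x. \<Psi> K x \<partial>N) - (\<integral>x. \<Psi> K x \<partial>M)) (at_right 0)"
    using L3 unfolding eq tendsto_cong[OF ev] .
  then show ?thesis unfolding K_def .
qed

lemma left_deriv:
  fixes J :: "'a::metric_space measure \<Rightarrow> real"
  assumes infl: "\<And>K. K \<in> prob_measures \<Longrightarrow> influence_function J K (\<Psi> K)"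
    and psi: "\<And>K. K \<in> prob_measures \<Longrightarrow> \<Psi> K \<in> borel_measurable borel"
    and bnd: "\<And>K. K \<in> prob_measures \<Longrightarrow> \<exists>B. \<forall>x. \<bar>\<Psi> K x\<bar> \<le> B"
    and M: "M \<in> prob_measures" and N: "N \<in> prob_measures" and e: "0 < e" "e \<le> 1"
  shows "((\<lambda>t. (J (mix (e - t) M N) - J (mix e M N)) / t) \<longlongrightarrow>
           (\<integral>x. \<Psi> (mix e M N) x \<partial>M) - (\<integral>x. \<Psi> (mix e M N) x \<partial>N)) (at_right 0)"
proof -
  define K where "K = mix e M N"
  have e0: "0 \<le> e" using e by simp
  have hK: "K \<in> prob_measures" unfolding K_def using mix_in[OF M N e0 e(2)] .
  have L1: "((\<lambda>s. (J (mix s K M) - J K) / s) \<longlongrightarrow> (\<integral>x. \<Psi> K x \<partial>M) - (\<integral>x. \<Psi> K x \<partial>K)) (at_right 0)"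
    using infl[OF hK] M unfolding influence_function_def by blast
  obtain B where B: "\<And>x. \<bar>\<Psi> K x\<bar> \<le> B" using bnd[OF hK] by blast
  have FKK: "(\<integral>x. \<Psi> K x \<partial>K) = (1 - e) * (\<integral>x. \<Psi> K x \<partial>M) + e * (\<integral>x. \<Psi> K x \<partial>N)"
    unfolding K_def using integral_mix(2)[OF M N e0 e(2) psi[OF hK[unfolded K_def]] B[unfolded K_def]]
    by (simp add: K_def)
  have c: "e > 0" using e by simp
  have L2: "((\<lambda>t. (J (mix (t / e) K M) - J K) / (t / e)) \<longlongrightarrow> (\<integral>x. \<Psi> K x \<partial>M) - (\<integral>x. \<Psi> K x \<partial>K)) (at_right 0)"
    using filterlim_compose[OF L1 filterlim_scale_at_right[OF c]] by simp
  have L3: "((\<lambda>t. ((J (mix (t / e) K M) - J K) / (t / e)) / e) \<longlongrightarrow>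
      ((\<integral>x. \<Psi> K x \<partial>M) - (\<integral>x. \<Psi> K x \<partial>K)) / e) (at_right 0)"
    using c by (intro tendsto_divide L2) auto
  have eq: "((\<integral>x. \<Psi> K x \<partial>M) - (\<integral>x. \<Psi> K x \<partial>K)) / e = (\<integral>x. \<Psi> K x \<partial>M) - (\<integral>x. \<Psi> K x \<partial>N)"
    using c unfolding FKK by (simp add: field_simps)
  have ev: "\<forall>\<^sub>F t in at_right 0. ((J (mix (t / e) K M) - J K) / (t / e)) / e
        = (J (mix (e - t) M N) - J K) / t"
    using eventually_at_right_real[OF c]
  proof eventually_elim
    case (elim t)
    then have s: "0 \<le> t / e" "t / e \<le> 1" using c by auto
    have "mix (t / e) K M = mix (e - t / e * e) M N"
      unfolding K_def by (rule mix_mix_left[OF M N e0 e(2) s])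
    also have "e - t / e * e = e - t" using c by simp
    finally show ?case using c elim by (simp add: field_simps)
  qed
  have "((\<lambda>t. (J (mix (e - t) M N) - J K) / t) \<longlongrightarrow> (\<integral>x. \<Psi> K x \<partial>M) - (\<integral>x. \<Psi> K x \<partial>N)) (at_right 0)"
    using L3 unfolding eq tendsto_cong[OF ev] .
  then show ?thesis unfolding K_def .
qed

lemma mvt_J:
  fixes J :: "'a::metric_space measure \<Rightarrow> real"
  assumes infl: "\<And>K. K \<in> prob_measures \<Longrightarrow> influence_function J K (\<Psi> K)"
    and psi: "\<And>K. K \<in> prob_measures \<Longrightarrow> \<Psi> K \<in> borel_measurable borel"
    and bnd: "\<And>K. K \<in> prob_measures \<Longrightarrow> \<exists>B. \<forall>x. \<bar>\<Psi> K x\<bar> \<le> B"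
    and M: "M \<in> prob_measures" and N: "N \<in> prob_measures"
  shows "\<exists>e. 0 < e \<and> e < 1 \<and>
     J N - J M = (\<integral>x. \<Psi> (mix e M N) x \<partial>N) - (\<integral>x. \<Psi> (mix e M N) x \<partial>M)"
proof -
  define g where "g e = J (mix e M N)" for e
  define D where "D e = (\<integral>x. \<Psi> (mix e M N) x \<partial>N) - (\<integral>x. \<Psi> (mix e M N) x \<partial>M)" for e
  note R = right_deriv[OF infl psi bnd M N]
  note L = left_deriv[OF infl psi bnd M N]
  have der: "DERIV g e :> D e" if e: "0 < e" "e < 1" for e
    unfolding DERIV_def
  proof (rule filterlim_split_at)
    show "((\<lambda>h. (g (e + h) - g e) / h) \<longlongrightarrow> D e) (at_right 0)"
      using R[of e] e unfolding g_def D_def by simp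
    have "((\<lambda>t. - ((g (e - t) - g e) / t)) \<longlongrightarrow> - (- D e)) (at_right 0)"
      using L[of e] e unfolding g_def D_def by (intro tendsto_minus) simp
    then show "((\<lambda>h. (g (e + h) - g e) / h) \<longlongrightarrow> D e) (at_left 0)"
      unfolding at_left_as_right[of 0] filterlim_filtermap by simp
  qed
  have cont_from: "((\<lambda>t. f t) \<longlongrightarrow> c) (at_right 0)"
    if "((\<lambda>t. (f t - c) / t) \<longlongrightarrow> d) (at_right 0)" for f :: "real \<Rightarrow> real" and c d
  proof -
    have "((\<lambda>t. t * ((f t - c) / t) + c) \<longlongrightarrow> 0 * d + c) (at_right 0)"
      by (intro tendsto_intros that tendsto_ident_at)
    moreover have "\<forall>\<^sub>F t in at_right 0. t * ((f t - c) / t) + c = f t"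
      using eventually_at_right_real[OF zero_less_one] by eventually_elim auto
    ultimately show ?thesis using tendsto_cong by fastforce
  qed
  have "continuous_on {0..1} g"
  proof (rule continuous_on_IccI)
    show "(g \<longlongrightarrow> g 0) (at_right 0)"
      using cont_from[of "\<lambda>t. g t" "g 0"] R[of 0] unfolding g_def by simp
    have "((\<lambda>t. g (1 - t)) \<longlongrightarrow> g 1) (at_right 0)"
      using cont_from[of "\<lambda>t. g (1 - t)" "g 1"] L[of 1] unfolding g_def by simp
    then show "(g \<longlongrightarrow> g 1) (at_left 1)"
      unfolding at_left_as_right[of 1] filterlim_filtermap .
    show "g \<midarrow>x\<rightarrow> g x" if "0 < x" "x < 1" for x
      using DERIV_isCont[OF der[OF that]] by (simp add: isCont_def)
  qed simp
  moreover have "g differentiable at x" if "0 < x" "x < 1" for x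
    using der[OF that] real_differentiable_def by blast
  ultimately obtain l z where z: "0 < z" "z < 1" "DERIV g z :> l" "g 1 - g 0 = (1 - 0) * l"
    using MVT[of 0 1 g] by auto
  have "l = D z" using DERIV_unique[OF z(3) der[OF z(1,2)]] .
  moreover have "g 1 = J N" "g 0 = J M" unfolding g_def using mix_0[OF M N] mix_1[OF M N] by auto
  ultimately show ?thesis using z unfolding D_def by auto
qed

lemma topspace_weak: "topspace (weak_topology :: 'a::metric_space measure topology) = prob_measures"
proof -
  have "prob_measures \<in> {{M \<in> prob_measures. (\<integral>x. f x \<partial>M) \<in> U} | (f :: 'a \<Rightarrow> real) U.
        continuous_on UNIV f \<and> bounded (range f) \<and> open U}"
    by (rule CollectI, rule exI[of _ "\<lambda>_. 0"], rule exI[of _ UNIV]) auto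
  then show ?thesis
    unfolding weak_topology_def topology_generated_by_topspace by auto
qed

lemma return_in: "return borel x \<in> prob_measures"
  unfolding prob_measures_def by (auto intro: prob_space_return)

lemma psi_meas:
  assumes "influence_function J M \<Psi>" "M \<in> prob_measures"
  shows "\<Psi> \<in> borel_measurable borel"
proof -
  have "integrable M \<Psi>" using assms unfolding influence_function_def by blast
  then have "\<Psi> \<in> borel_measurable M" by blast
  then show ?thesis using prob_measuresD(1)[OF assms(2)] measurable_cong_sets by blast
qed

lemma weak_gen_E:
  fixes S :: "'a::metric_space measure set"
  assumes "S \<in> {{M \<in> prob_measures. (\<integral>x. f x \<partial>M) \<in> U} | (f :: 'a \<Rightarrow> real) U.
        continuous_on UNIV f \<and> bounded (range f) \<and> open U}"
  obtains f :: "'a \<Rightarrow> real" and U :: "real set" where "S = {M \<in> prob_measures. (\<integral>x. f x \<partial>M) \<in> U}" "continuous_on UNIV f" "bounded (range f)" "open U"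
  using assms by blast

lemma cont_return: "continuous_map euclidean weak_topology (\<lambda>x::'a::metric_space. return borel x)"
  unfolding weak_topology_def
proof (rule continuous_on_generated_topo)
  fix S assume "S \<in> {{M \<in> prob_measures. (\<integral>x. f x \<partial>M) \<in> U} | (f :: 'a \<Rightarrow> real) U.
        continuous_on UNIV f \<and> bounded (range f) \<and> open U}"
  then obtain f :: "'a \<Rightarrow> real" and U where S: "S = {M \<in> prob_measures. (\<integral>x. f x \<partial>M) \<in> U}"
    and f: "continuous_on UNIV f" and U: "open U" by (rule weak_gen_E)
  have fm: "f \<in> borel_measurable borel" using f by (rule borel_measurable_continuous_onI)
  have ir: "(\<integral>y. f y \<partial>return borel x) = f x" for x
    by (rule integral_return) (simp_all add: fm)
  have "(\<lambda>x. return borel x) -` S \<inter> topspace euclidean = f -` U"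
  proof (rule set_eqI)
    fix x
    show "x \<in> (\<lambda>x. return borel x) -` S \<inter> topspace euclidean \<longleftrightarrow> x \<in> f -` U"
      unfolding S using return_in[of x] ir[of x] by simp
  qed
  moreover have "open (f -` U)" using f U by (simp add: open_vimage)
  ultimately show "openin euclidean ((\<lambda>x. return borel x) -` S \<inter> topspace euclidean)" by simp
next
  have "prob_measures \<in> {{M \<in> prob_measures. (\<integral>x. f x \<partial>M) \<in> U} | (f :: 'a \<Rightarrow> real) U.
        continuous_on UNIV f \<and> bounded (range f) \<and> open U}"
    by (rule CollectI, rule exI[of _ "\<lambda>_. 0"], rule exI[of _ UNIV]) auto
  then show "(\<lambda>x. return borel x) ` topspace euclidean \<subseteq> \<Union> {{M \<in> prob_measures. (\<integral>x. f x \<partial>M) \<in> U} | (f :: 'a \<Rightarrow> real) U.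
        continuous_on UNIV f \<and> bounded (range f) \<and> open U}"
    using return_in by blast
qed

lemma joint_cont:
  fixes \<Psi> :: "'a::metric_space measure \<Rightarrow> 'a \<Rightarrow> real"
  assumes infl: "\<And>K. K \<in> prob_measures \<Longrightarrow> influence_function J K (\<Psi> K)"
    and cont: "continuous_map (prod_topology weak_topology weak_topology) euclideanreal
           (\<lambda>(M, N). \<integral>x. \<Psi> M x \<partial>N)"
  shows "continuous_map (prod_topology weak_topology euclidean) euclideanreal (\<lambda>(M, x). \<Psi> M x)"
proof -
  have c1: "continuous_map (prod_topology weak_topology euclidean) (prod_topology weak_topology weak_topology)
      (\<lambda>p. (fst p, return borel (snd p)))"
    by (intro continuous_map_pairedI continuous_map_fst continuous_map_compose[OF continuous_map_snd cont_return, unfolded o_def])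
  have c2: "continuous_map (prod_topology weak_topology euclidean) euclideanreal
      ((\<lambda>(M, N). \<integral>x. \<Psi> M x \<partial>N) \<circ> (\<lambda>p. (fst p, return borel (snd p))))"
    by (rule continuous_map_compose[OF c1 cont])
  show ?thesis
  proof (rule continuous_map_eq[OF c2])
    fix p assume "p \<in> topspace (prod_topology (weak_topology :: 'a measure topology) (euclidean :: 'a topology))"
    then have "fst p \<in> prob_measures" by (auto simp: topspace_weak)
    then have "\<Psi> (fst p) \<in> borel_measurable borel" using psi_meas infl by blast
    then show "((\<lambda>(M, N). \<integral>x. \<Psi> M x \<partial>N) \<circ> (\<lambda>p. (fst p, return borel (snd p)))) p = (\<lambda>(M, x). \<Psi> M x) p"
      by (auto simp: integral_return split: prod.splits)
  qed
qed

lemma psi_cont: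
  fixes \<Psi> :: "'a::metric_space measure \<Rightarrow> 'a \<Rightarrow> real"
  assumes jc: "continuous_map (prod_topology weak_topology euclidean) euclideanreal (\<lambda>(M, x). \<Psi> M x)"
    and M: "M \<in> prob_measures"
  shows "continuous_on UNIV (\<Psi> M)"
proof -
  have "continuous_map euclidean (prod_topology weak_topology euclidean) (\<lambda>x::'a. (M, x))"
    using M by (intro continuous_map_pairedI) (auto simp: topspace_weak)
  from continuous_map_compose[OF this jc] show ?thesis
    by (simp add: o_def)
qed

lemma psi_bnd:
  fixes g :: "'a::metric_space \<Rightarrow> real"
  assumes "compact (UNIV :: 'a set)" "continuous_on UNIV g"
  shows "\<exists>B. \<forall>x. \<bar>g x\<bar> \<le> B"
proof -
  have "bounded (range g)" using compact_continuous_image[OF assms(2,1)] compact_imp_bounded by blast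
  then show ?thesis unfolding bounded_iff by auto
qed

lemma tube:
  fixes \<Psi> :: "'a::metric_space measure \<Rightarrow> 'a \<Rightarrow> real"
  assumes cpt: "compact (UNIV :: 'a set)"
    and jc: "continuous_map (prod_topology weak_topology euclidean) euclideanreal (\<lambda>(M, x). \<Psi> M x)"
    and M0: "M0 \<in> prob_measures" and eps: "\<epsilon> > 0"
  shows "\<exists>W. openin weak_topology W \<and> M0 \<in> W \<and> (\<forall>M\<in>W. \<forall>x. \<bar>\<Psi> M x - \<Psi> M0 x\<bar> < \<epsilon>)"
proof -
  have c0: "continuous_on UNIV (\<Psi> M0)" by (rule psi_cont[OF jc M0])
  have "continuous_map (prod_topology (weak_topology :: 'a measure topology) euclidean) euclideanreal (\<Psi> M0 \<circ> snd)"
    by (rule continuous_map_compose[OF continuous_map_snd]) (simp add: c0)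
  then have "continuous_map (prod_topology (weak_topology :: 'a measure topology) euclidean) euclideanreal (\<lambda>p. \<Psi> M0 (snd p))"
    by (simp add: o_def)
  then have cd: "continuous_map (prod_topology weak_topology euclidean) euclideanreal
     (\<lambda>p. (\<lambda>(M, x). \<Psi> M x) p - \<Psi> M0 (snd p))"
    using jc by (intro continuous_map_diff) auto
  define Wset where "Wset = {p \<in> topspace (prod_topology weak_topology (euclidean::'a topology)).
       (\<lambda>(M, x). \<Psi> M x) p - \<Psi> M0 (snd p) \<in> {-\<epsilon><..<\<epsilon>}}"
  have op: "openin (prod_topology weak_topology euclidean) Wset"
    unfolding Wset_def by (rule openin_continuous_map_preimage[OF cd]) auto
  have sub: "{M0} \<times> UNIV \<subseteq> Wset"
    using M0 eps by (auto simp: Wset_def topspace_weak)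
  obtain U V where UV: "openin weak_topology U" "openin euclidean V" "M0 \<in> U" "UNIV \<subseteq> V" "U \<times> V \<subseteq> Wset"
    using tube_lemma_right[OF op _ _ sub] cpt M0 by (auto simp: topspace_weak)
  show ?thesis
  proof (intro exI conjI ballI allI)
    show "openin weak_topology U" "M0 \<in> U" using UV by auto
    fix M x assume "M \<in> U"
    then have "(M, x) \<in> Wset" using UV by auto
    then show "\<bar>\<Psi> M x - \<Psi> M0 x\<bar> < \<epsilon>" unfolding Wset_def by auto
  qed
qed

lemma weak_eventually:
  fixes m :: "nat \<Rightarrow> 'a::metric_space measure"
  assumes m: "\<And>n. m n \<in> prob_measures"
    and conv: "\<And>f :: 'a \<Rightarrow> real. continuous_on UNIV f \<Longrightarrow> bounded (range f) \<Longrightarrow>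
        ((\<lambda>n. \<integral>x. f x \<partial>m n) \<longlongrightarrow> (\<integral>x. f x \<partial>M0)) sequentially"
    and W: "openin weak_topology W" "M0 \<in> W"
  shows "eventually (\<lambda>n. m n \<in> W) sequentially"
proof -
  have "generate_topology_on {{M \<in> prob_measures. (\<integral>x. f x \<partial>M) \<in> U} | (f :: 'a \<Rightarrow> real) U.
        continuous_on UNIV f \<and> bounded (range f) \<and> open U} W"
    using W(1) unfolding weak_topology_def by (rule openin_topology_generated_by)
  then show ?thesis using W(2)
  proof (induction)
    case Empty then show ?case by simp
  next
    case (Int a b) then show ?case by (auto intro: eventually_conj elim: eventually_mono)
  next
    case (UN K)
    then obtain k where k: "k \<in> K" "M0 \<in> k" by auto
    with UN have "\<forall>\<^sub>F n in sequentially. m n \<in> k" by blast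
    then show ?case by (rule eventually_mono) (use k in auto)
  next
    case (Basis s)
    from Basis(1) obtain f :: "'a \<Rightarrow> real" and U where S: "s = {M \<in> prob_measures. (\<integral>x. f x \<partial>M) \<in> U}"
      and f: "continuous_on UNIV f" "bounded (range f)" and U: "open U" by (rule weak_gen_E)
    have "eventually (\<lambda>n. (\<integral>x. f x \<partial>m n) \<in> U) sequentially"
      using topological_tendstoD[OF conv[OF f] U] Basis(2) S by auto
    then show ?case using m unfolding S by (auto elim: eventually_mono)
  qed
qed

lemma ubp:
  fixes T :: "nat \<Rightarrow> 'v::{real_normed_vector,complete_space} \<Rightarrow> real"
  assumes lin: "\<And>n. bounded_linear (T n)"
    and pw: "\<And>g. bounded (range (\<lambda>n. T n g))"
  shows "\<exists>C. \<forall>n g. \<bar>T n g\<bar> \<le> C * norm g"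
proof -
  define E where "E k = {g. \<forall>n. \<bar>T n g\<bar> \<le> real k}" for k :: nat
  have cl: "closed (E k)" for k
  proof -
    have "E k = (\<Inter>n. {g. \<bar>T n g\<bar> \<le> real k})" unfolding E_def by auto
    moreover have "closed {g. \<bar>T n g\<bar> \<le> real k}" for n
      by (intro closed_Collect_le continuous_intros linear_continuous_on lin)
    ultimately show ?thesis by auto
  qed
  have cov: "(\<Union>k. E k) = UNIV"
  proof -
    have "\<exists>k. g \<in> E k" for g
    proof -
      obtain B where "\<forall>n. \<bar>T n g\<bar> \<le> B" using pw[of g] unfolding bounded_iff by auto
      moreover obtain k :: nat where "B \<le> real k" using real_arch_simple by blast
      ultimately have "\<forall>n. \<bar>T n g\<bar> \<le> real k" by (meson order_trans)
      then show ?thesis unfolding E_def by blast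
    qed
    then show ?thesis by blast
  qed
  have "\<exists>k. interior (E k) \<noteq> {}"
  proof (rule ccontr)
    assume "\<not> ?thesis"
    then have "\<And>S. S \<in> range E \<Longrightarrow> closedin euclidean S \<and> euclidean interior_of S = {}"
      using cl by auto
    then have "euclidean interior_of \<Union>(range E) = {}"
      by (intro Baire_category_alt) (auto simp: completely_metrizable_space_euclidean)
    then show False using cov by simp
  qed
  then obtain k g0 where "g0 \<in> interior (E k)" by blast
  then obtain r where r: "r > 0" "ball g0 r \<subseteq> E k"
    using open_contains_ball open_interior interior_subset by (metis subset_trans)
  have "\<bar>T n g\<bar> \<le> (4 * real k / r) * norm g" for n g
  proof (cases "g = 0")
    case True
    then show ?thesis using linear_0[OF bounded_linear.linear[OF lin]] by simp
  next
    case False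
    define c where "c = r / (2 * norm g)"
    have c: "c > 0" using False r by (simp add: c_def)
    have "g0 + c *\<^sub>R g \<in> ball g0 r"
      using False r by (simp add: c_def dist_norm)
    then have h1: "\<bar>T n (g0 + c *\<^sub>R g)\<bar> \<le> real k" using r unfolding E_def by auto
    have h2: "\<bar>T n g0\<bar> \<le> real k" using r \<open>r > 0\<close> unfolding E_def by (metis (mono_tags, lifting) centre_in_ball mem_Collect_eq subsetD)
    have lin': "T n (g0 + c *\<^sub>R g) = T n g0 + c * T n g"
      using bounded_linear.linear[OF lin] by (simp add: linear_add linear_scale)
    have "c * \<bar>T n g\<bar> \<le> 2 * real k" using h1 h2 lin' c by (simp add: abs_mult)
    then have "\<bar>T n g\<bar> \<le> 2 * real k / c" using c by (simp add: field_simps)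
    also have "2 * real k / c = (4 * real k / r) * norm g"
      using False r by (simp add: c_def field_simps)
    finally show ?thesis .
  qed
  then show ?thesis by blast
qed

lemma integrable_bc:
  fixes f :: "'a::metric_space \<Rightarrow> real"
  assumes K: "finite_measure K" "sets K = sets borel"
    and f: "continuous_on UNIV f" and B: "\<And>x. \<bar>f x\<bar> \<le> B"
  shows "integrable K f" "\<bar>\<integral>x. f x \<partial>K\<bar> \<le> B * measure K UNIV"
proof -
  interpret finite_measure K by (rule K(1))
  have sp: "space K = UNIV" using K(2) sets_eq_imp_space_eq by fastforce
  have fm: "f \<in> borel_measurable K"
    using borel_measurable_continuous_onI[OF f] K(2) measurable_cong_sets by blast
  show i: "integrable K f"
    by (rule integrable_const_bound[where B=B]) (use fm B in auto)
  have "\<bar>\<integral>x. f x \<partial>K\<bar> \<le> (\<integral>x. norm (f x) \<partial>K)"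
    using integral_norm_bound[of K f] by simp
  also have "\<dots> \<le> (\<integral>x. B \<partial>K)"
    using i B by (intro integral_mono) auto
  also have "\<dots> = B * measure K UNIV" using sp by (simp add: mult.commute)
  finally show "\<bar>\<integral>x. f x \<partial>K\<bar> \<le> B * measure K UNIV" .
qed

lemma Phi_bl:
  assumes K: "finite_measure K" "sets K = sets (borel :: 'a::metric_space measure)"
  shows "bounded_linear (\<lambda>g::'a \<Rightarrow>\<^sub>C real. \<integral>x. apply_bcontfun g x \<partial>K)"
proof (rule bounded_linear_intro)
  have i: "integrable K (apply_bcontfun g)" for g :: "'a \<Rightarrow>\<^sub>C real"
    using integrable_bc(1)[OF K continuous_on_apply_bcontfun norm_bounded[of g, unfolded real_norm_def]] .
  fix g h :: "'a \<Rightarrow>\<^sub>C real" and r :: real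
  show "(\<integral>x. apply_bcontfun (g + h) x \<partial>K) = (\<integral>x. apply_bcontfun g x \<partial>K) + (\<integral>x. apply_bcontfun h x \<partial>K)"
    using i[of g] i[of h] by simp
  show "(\<integral>x. apply_bcontfun (r *\<^sub>R g) x \<partial>K) = r *\<^sub>R (\<integral>x. apply_bcontfun g x \<partial>K)"
    by simp
  show "norm (\<integral>x. apply_bcontfun g x \<partial>K) \<le> norm g * measure K UNIV"
    using integrable_bc(2)[OF K continuous_on_apply_bcontfun norm_bounded[of g, unfolded real_norm_def]] by simp
qed

lemma deriv_from_quot:
  fixes f :: "'b::euclidean_space \<Rightarrow> real"
  assumes D: "bounded_linear D"
    and q: "((\<lambda>h. (f (\<theta> + h) - f \<theta> - D h) / norm h) \<longlongrightarrow> 0) (at 0)"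
  shows "(f has_derivative D) (at \<theta>)"
proof -
  have "((\<lambda>h. norm ((f (\<theta> + h) - f \<theta> - D h) / norm h)) \<longlongrightarrow> 0) (at 0)"
    using tendsto_norm_zero[OF q] .
  then have "((\<lambda>h. norm (f (\<theta> + h) - f \<theta> - D (\<theta> + h - \<theta>)) / norm (\<theta> + h - \<theta>)) \<longlongrightarrow> 0) (at 0)"
    by simp
  then have "((\<lambda>y. norm (f y - f \<theta> - D (y - \<theta>)) / norm (y - \<theta>)) \<longlongrightarrow> 0) (at \<theta>)"
    by (rule LIM_offset_zero_cancel)
  then show ?thesis using D by (simp add: has_derivative_iff_norm)
qed

theorem theorem1:
  fixes J :: "'a::metric_space measure \<Rightarrow> real"
    and \<Psi> :: "'a measure \<Rightarrow> 'a \<Rightarrow> real"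
    and \<mu> :: "'b::euclidean_space \<Rightarrow> 'a measure"
    and \<theta> :: 'b
  assumes "compact (UNIV :: 'a set)"
    and "\<And>M. M \<in> prob_measures \<Longrightarrow> influence_function J M (\<Psi> M)"
    and "continuous_map (prod_topology weak_topology weak_topology) euclideanreal
           (\<lambda>(M, N). \<integral>x. \<Psi> M x \<partial>N)"
    and "\<And>t. \<mu> t \<in> prob_measures"
    and "\<And>t. weakly_differentiable_at \<mu> t"
  shows "\<exists>D. ((\<lambda>t. J (\<mu> t)) has_derivative D) (at \<theta>) \<and>
             ((\<lambda>t. \<integral>x. \<Psi> (\<mu> \<theta>) x \<partial>\<mu> t) has_derivative D) (at \<theta>)"
proof -
  note cpt = assms(1) and infl = assms(2) and cont = assms(3) and muP = assms(4) and wd = assms(5)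
  have jc: "continuous_map (prod_topology weak_topology euclidean) euclideanreal (\<lambda>(M, x). \<Psi> M x)"
    by (rule joint_cont[OF infl cont])
  have psiC: "continuous_on UNIV (\<Psi> K)" if "K \<in> prob_measures" for K
    by (rule psi_cont[OF jc that])
  have psiM: "\<Psi> K \<in> borel_measurable borel" if "K \<in> prob_measures" for K
    using psi_meas infl that by blast
  have psiB: "\<exists>B. \<forall>x. \<bar>\<Psi> K x\<bar> \<le> B" if "K \<in> prob_measures" for K
    by (rule psi_bnd[OF cpt psiC[OF that]])
  have bc: "bounded (range f)" if "continuous_on UNIV f" for f :: "'a \<Rightarrow> real"
    using compact_continuous_image[OF that cpt] compact_imp_bounded by blast
  define \<mu>0 where "\<mu>0 = \<mu> \<theta>"
  have P0: "\<mu>0 \<in> prob_measures" unfolding \<mu>0_def by (rule muP)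
  obtain Pm Nm :: "'b \<Rightarrow> 'a measure" where
    fin: "\<forall>b\<in>Basis. finite_measure (Pm b) \<and> sets (Pm b) = sets borel \<and>
                    finite_measure (Nm b) \<and> sets (Nm b) = sets borel"
    and LIM: "\<And>f :: 'a \<Rightarrow> real. continuous_on UNIV f \<and> bounded (range f) \<Longrightarrow>
           ((\<lambda>h. ((\<integral>x. f x \<partial>\<mu> (\<theta> + h)) - (\<integral>x. f x \<partial>\<mu> \<theta>)
                   - (\<Sum>b\<in>Basis. (h \<bullet> b) * ((\<integral>x. f x \<partial>Pm b) - (\<integral>x. f x \<partial>Nm b)))) / norm h)
             \<longlongrightarrow> 0) (at 0)"
    using wd[of \<theta>] unfolding weakly_differentiable_at_def by blast
  define Lf where "Lf f h = (\<Sum>b\<in>Basis. (h \<bullet> b) * ((\<integral>x. f x \<partial>Pm b) - (\<integral>x. f x \<partial>Nm b)))"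
    for f :: "'a \<Rightarrow> real" and h :: 'b
  have Lfbl: "bounded_linear (Lf f)" for f
    unfolding Lf_def by (intro bounded_linear_sum bounded_linear_mult_const bounded_linear_inner_left)
  define \<Psi>0 where "\<Psi>0 = \<Psi> \<mu>0"
  define D where "D = Lf \<Psi>0"
  have Dbl: "bounded_linear D" unfolding D_def by (rule Lfbl)
  have cont_mu: "((\<lambda>h. \<integral>x. f x \<partial>\<mu> (\<theta> + h)) \<longlongrightarrow> (\<integral>x. f x \<partial>\<mu> \<theta>)) (at 0)"
    if f: "continuous_on UNIV f" for f :: "'a \<Rightarrow> real"
  proof -
    define q where "q h = ((\<integral>x. f x \<partial>\<mu> (\<theta> + h)) - (\<integral>x. f x \<partial>\<mu> \<theta>) - Lf f h) / norm h" for h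
    have q: "(q \<longlongrightarrow> 0) (at 0)" unfolding q_def Lf_def using LIM[of f] f bc[OF f] by blast
    have "((\<lambda>h. norm h * q h + Lf f h + (\<integral>x. f x \<partial>\<mu> \<theta>)) \<longlongrightarrow> 0 * 0 + Lf f 0 + (\<integral>x. f x \<partial>\<mu> \<theta>)) (at 0)"
      by (intro tendsto_intros q bounded_linear.tendsto[OF Lfbl] tendsto_norm_zero tendsto_ident_at)
    moreover have "Lf f 0 = 0" unfolding Lf_def by simp
    moreover have "\<forall>\<^sub>F h in at 0. norm h * q h + Lf f h + (\<integral>x. f x \<partial>\<mu> \<theta>) = (\<integral>x. f x \<partial>\<mu> (\<theta> + h))"
      unfolding eventually_at_filter q_def by (auto intro!: always_eventually)
    ultimately show ?thesis using tendsto_cong by fastforce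
  qed
  show ?thesis
  proof (intro exI conjI)
    show "((\<lambda>t. \<integral>x. \<Psi> (\<mu> \<theta>) x \<partial>\<mu> t) has_derivative D) (at \<theta>)"
    proof (rule deriv_from_quot[OF Dbl])
      show "((\<lambda>h. ((\<integral>x. \<Psi> (\<mu> \<theta>) x \<partial>\<mu> (\<theta> + h)) - (\<integral>x. \<Psi> (\<mu> \<theta>) x \<partial>\<mu> \<theta>) - D h) / norm h) \<longlongrightarrow> 0) (at 0)"
        using LIM[of "\<Psi> (\<mu> \<theta>)"] psiC[OF P0] bc[OF psiC[OF P0]]
        unfolding D_def Lf_def \<Psi>0_def \<mu>0_def by blast
    qed
    show "((\<lambda>t. J (\<mu> t)) has_derivative D) (at \<theta>)"
    proof (rule deriv_from_quot[OF Dbl])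
      show "((\<lambda>h. (J (\<mu> (\<theta> + h)) - J (\<mu> \<theta>) - D h) / norm h) \<longlongrightarrow> 0) (at 0)"
      proof (unfold tendsto_at_iff_sequentially, intro allI impI)
        fix X :: "nat \<Rightarrow> 'b" assume X0: "\<forall>i. X i \<in> UNIV - {0}" and Xl: "X \<longlonglongrightarrow> 0"
        show "((\<lambda>h. (J (\<mu> (\<theta> + h)) - J (\<mu> \<theta>) - D h) / norm h) \<circ> X) \<longlonglongrightarrow> 0"
        proof -
        have Xn: "X n \<noteq> 0" for n using X0 by auto
        have Xat: "filterlim X (at 0) sequentially"
          unfolding filterlim_at using Xn Xl by auto
        define \<nu> where "\<nu> n = \<mu> (\<theta> + X n)" for n
        have \<nu>P: "\<nu> n \<in> prob_measures" for n unfolding \<nu>_def by (rule muP)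
        have "\<forall>n. \<exists>e. 0 < e \<and> e < 1 \<and> J (\<nu> n) - J \<mu>0 =
             (\<integral>x. \<Psi> (mix e \<mu>0 (\<nu> n)) x \<partial>\<nu> n) - (\<integral>x. \<Psi> (mix e \<mu>0 (\<nu> n)) x \<partial>\<mu>0)"
          using mvt_J[OF infl psiM psiB P0 \<nu>P] by blast
        then obtain e where e0: "\<And>n. 0 < e n" and e1: "\<And>n. e n < 1"
          and eJ: "\<And>n. J (\<nu> n) - J \<mu>0 =
             (\<integral>x. \<Psi> (mix (e n) \<mu>0 (\<nu> n)) x \<partial>\<nu> n) - (\<integral>x. \<Psi> (mix (e n) \<mu>0 (\<nu> n)) x \<partial>\<mu>0)"
          by metis
        define m where "m n = mix (e n) \<mu>0 (\<nu> n)" for n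
        have mP: "m n \<in> prob_measures" for n
          unfolding m_def using mix_in[OF P0 \<nu>P, of "e n"] e0[of n] e1[of n] by simp
        have conv_nu: "(\<lambda>n. \<integral>x. f x \<partial>\<nu> n) \<longlonglongrightarrow> (\<integral>x. f x \<partial>\<mu>0)"
          if f: "continuous_on UNIV f" for f :: "'a \<Rightarrow> real"
          using filterlim_compose[OF cont_mu[OF f] Xat] unfolding \<nu>_def \<mu>0_def by simp
        have conv_m: "(\<lambda>n. \<integral>x. f x \<partial>m n) \<longlonglongrightarrow> (\<integral>x. f x \<partial>\<mu>0)"
          if f: "continuous_on UNIV f" "bounded (range f)" for f :: "'a \<Rightarrow> real"
        proof -
          obtain B where B: "\<And>x. \<bar>f x\<bar> \<le> B" using f(2) unfolding bounded_iff by auto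
          have fm: "f \<in> borel_measurable borel" using f(1) by (rule borel_measurable_continuous_onI)
          have eq: "(\<integral>x. f x \<partial>m n) - (\<integral>x. f x \<partial>\<mu>0) = e n * ((\<integral>x. f x \<partial>\<nu> n) - (\<integral>x. f x \<partial>\<mu>0))" for n
            unfolding m_def integral_mix(2)[OF P0 \<nu>P less_imp_le[OF e0[of n]] less_imp_le[OF e1[of n]] fm B]
            by (simp add: algebra_simps)
          have "(\<lambda>n. (\<integral>x. f x \<partial>\<nu> n) - (\<integral>x. f x \<partial>\<mu>0)) \<longlonglongrightarrow> 0"
            using conv_nu[OF f(1)] by (simp add: LIM_zero_iff)
          then have "(\<lambda>n. \<bar>(\<integral>x. f x \<partial>\<nu> n) - (\<integral>x. f x \<partial>\<mu>0)\<bar>) \<longlonglongrightarrow> 0"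
            by (rule tendsto_rabs_zero)
          then have "(\<lambda>n. (\<integral>x. f x \<partial>m n) - (\<integral>x. f x \<partial>\<mu>0)) \<longlonglongrightarrow> 0"
          proof (rule Lim_null_comparison[rotated])
            show "\<forall>\<^sub>F n in sequentially. norm ((\<integral>x. f x \<partial>m n) - (\<integral>x. f x \<partial>\<mu>0)) \<le> \<bar>(\<integral>x. f x \<partial>\<nu> n) - (\<integral>x. f x \<partial>\<mu>0)\<bar>"
            proof (rule always_eventually, rule allI)
              fix n
              have "\<bar>e n\<bar> \<le> 1" using e0[of n] e1[of n] by simp
              then show "norm ((\<integral>x. f x \<partial>m n) - (\<integral>x. f x \<partial>\<mu>0)) \<le> \<bar>(\<integral>x. f x \<partial>\<nu> n) - (\<integral>x. f x \<partial>\<mu>0)\<bar>"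
                unfolding eq real_norm_def abs_mult by (simp add: mult_left_le_one_le)
            qed
          qed
          then show ?thesis by (simp add: LIM_zero_iff)
        qed
        define g where "g n = (\<lambda>x. \<Psi> (m n) x - \<Psi>0 x)" for n
        have gC: "continuous_on UNIV (g n)" for n
          unfolding g_def \<Psi>0_def using psiC[OF mP] psiC[OF P0] by (intro continuous_intros) auto
        have gmem: "g n \<in> bcontfun" for n unfolding bcontfun_def using gC bc[OF gC] by auto
        define G where "G n = Bcontfun (g n)" for n
        have Gapp: "apply_bcontfun (G n) = g n" for n unfolding G_def using gmem Bcontfun_inverse by blast
        have Gnorm: "(\<lambda>n. norm (G n)) \<longlonglongrightarrow> 0"
        proof (rule tendstoI)
          fix \<epsilon> :: real assume "\<epsilon> > 0"
          then have "\<epsilon> / 2 > 0" by simp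
          obtain W where W: "openin weak_topology W" "\<mu>0 \<in> W" "\<forall>M\<in>W. \<forall>x. \<bar>\<Psi> M x - \<Psi> \<mu>0 x\<bar> < \<epsilon> / 2"
            using tube[OF cpt jc P0 \<open>\<epsilon> / 2 > 0\<close>] by blast
          have "eventually (\<lambda>n. m n \<in> W) sequentially"
            by (rule weak_eventually[OF mP conv_m W(1,2)])
          then show "\<forall>\<^sub>F n in sequentially. dist (norm (G n)) 0 < \<epsilon>"
          proof eventually_elim
            case (elim n)
            have "norm (G n) \<le> \<epsilon> / 2"
              by (rule norm_bound) (use W(3) elim in \<open>auto simp: Gapp g_def \<Psi>0_def less_imp_le\<close>)
            then show ?case using \<open>\<epsilon> > 0\<close> by simp
          qed
        qed
        define T where "T n (u :: 'a \<Rightarrow>\<^sub>C real) =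
            ((\<integral>x. apply_bcontfun u x \<partial>\<nu> n) - (\<integral>x. apply_bcontfun u x \<partial>\<mu>0)
              - Lf (apply_bcontfun u) (X n)) / norm (X n)" for n u
        have finP: "finite_measure K \<and> sets K = sets borel" if "K \<in> prob_measures" for K
          using prob_measuresD[OF that] by (simp add: prob_space_def)
        have Tbl: "bounded_linear (T n)" for n
        proof -
          have "bounded_linear (\<lambda>u::'a \<Rightarrow>\<^sub>C real. (\<integral>x. apply_bcontfun u x \<partial>\<nu> n) - (\<integral>x. apply_bcontfun u x \<partial>\<mu>0)
              - Lf (apply_bcontfun u) (X n))"
            unfolding Lf_def
            using fin finP[OF \<nu>P] finP[OF P0]
            by (intro bounded_linear_sub bounded_linear_sum bounded_linear_const_mult Phi_bl) auto
          then show ?thesis unfolding T_def[abs_def]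
            by (rule bounded_linear_compose[OF bounded_linear_divide])
        qed
        have Tlim: "(\<lambda>n. T n u) \<longlonglongrightarrow> 0" for u
        proof -
          have "((\<lambda>h. ((\<integral>x. apply_bcontfun u x \<partial>\<mu> (\<theta> + h)) - (\<integral>x. apply_bcontfun u x \<partial>\<mu> \<theta>)
                   - Lf (apply_bcontfun u) h) / norm h) \<longlongrightarrow> 0) (at 0)"
            unfolding Lf_def using LIM[of "apply_bcontfun u"] bc[OF continuous_on_apply_bcontfun] by blast
          from filterlim_compose[OF this Xat] show ?thesis
            unfolding T_def \<nu>_def \<mu>0_def by simp
        qed
        obtain C where C: "\<And>n u. \<bar>T n u\<bar> \<le> C * norm u"
          using ubp[OF Tbl convergent_imp_bounded[OF Tlim]] by blast
        define \<Psi>0C where "\<Psi>0C = Bcontfun \<Psi>0"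
        have \<Psi>0mem: "\<Psi>0 \<in> bcontfun" unfolding bcontfun_def \<Psi>0_def using psiC[OF P0] bc[OF psiC[OF P0]] by auto
        have \<Psi>0app: "apply_bcontfun \<Psi>0C = \<Psi>0" unfolding \<Psi>0C_def using \<Psi>0mem Bcontfun_inverse by blast
        define Kc where "Kc = (\<Sum>b\<in>Basis. measure (Pm b) UNIV + measure (Nm b) UNIV)"
        have Lbound: "\<bar>Lf (apply_bcontfun u) h\<bar> \<le> norm h * (norm u * Kc)" for u h
        proof -
          have "\<bar>Lf (apply_bcontfun u) h\<bar> \<le> (\<Sum>b\<in>Basis. \<bar>(h \<bullet> b) * ((\<integral>x. apply_bcontfun u x \<partial>Pm b) - (\<integral>x. apply_bcontfun u x \<partial>Nm b))\<bar>)"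
            unfolding Lf_def by (rule sum_abs)
          also have "\<dots> \<le> (\<Sum>b\<in>Basis. norm h * (norm u * (measure (Pm b) UNIV + measure (Nm b) UNIV)))"
          proof (rule sum_mono)
            fix b :: 'b assume b: "b \<in> Basis"
            have ub: "\<bar>apply_bcontfun u x\<bar> \<le> norm u" for x using norm_bounded[of u x] by simp
            have i1: "\<bar>\<integral>x. apply_bcontfun u x \<partial>Pm b\<bar> \<le> norm u * measure (Pm b) UNIV"
              using integrable_bc(2)[OF _ _ continuous_on_apply_bcontfun ub] fin b by blast
            have i2: "\<bar>\<integral>x. apply_bcontfun u x \<partial>Nm b\<bar> \<le> norm u * measure (Nm b) UNIV"
              using integrable_bc(2)[OF _ _ continuous_on_apply_bcontfun ub] fin b by blast
            have "\<bar>(\<integral>x. apply_bcontfun u x \<partial>Pm b) - (\<integral>x. apply_bcontfun u x \<partial>Nm b)\<bar> \<le> norm u * (measure (Pm b) UNIV + measure (Nm b) UNIV)"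
              using i1 i2 by (simp add: algebra_simps)
            moreover have "\<bar>h \<bullet> b\<bar> \<le> norm h" using Basis_le_norm[OF b] .
            ultimately show "\<bar>(h \<bullet> b) * ((\<integral>x. apply_bcontfun u x \<partial>Pm b) - (\<integral>x. apply_bcontfun u x \<partial>Nm b))\<bar>
                \<le> norm h * (norm u * (measure (Pm b) UNIV + measure (Nm b) UNIV))"
              unfolding abs_mult by (intro mult_mono) auto
          qed
          also have "\<dots> = norm h * (norm u * Kc)"
            unfolding Kc_def by (simp add: sum_distrib_left)
          finally show ?thesis .
        qed
        have ident: "(J (\<mu> (\<theta> + X n)) - J (\<mu> \<theta>) - D (X n)) / norm (X n)
            = T n (G n) + T n \<Psi>0C + Lf (apply_bcontfun (G n)) (X n) / norm (X n)" for n
        proof -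
          obtain B1 where B1: "\<And>x. \<bar>\<Psi> (m n) x\<bar> \<le> B1" using psiB[OF mP] by blast
          obtain B0 where B0: "\<And>x. \<bar>\<Psi>0 x\<bar> \<le> B0" using psiB[OF P0] unfolding \<Psi>0_def by blast
          have int: "integrable K (\<Psi> (m n))" "integrable K \<Psi>0" if "K \<in> prob_measures" for K
            using integrable_bc(1)[OF _ _ psiC[OF mP] B1] integrable_bc(1)[OF _ _ psiC[OF P0] B0[unfolded \<Psi>0_def]]
              finP[OF that] unfolding \<Psi>0_def by auto
          have g1: "(\<integral>x. g n x \<partial>\<nu> n) = (\<integral>x. \<Psi> (m n) x \<partial>\<nu> n) - (\<integral>x. \<Psi>0 x \<partial>\<nu> n)"
            unfolding g_def using int[OF \<nu>P[of n]] by (rule Bochner_Integration.integral_diff)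
          have g2: "(\<integral>x. g n x \<partial>\<mu>0) = (\<integral>x. \<Psi> (m n) x \<partial>\<mu>0) - (\<integral>x. \<Psi>0 x \<partial>\<mu>0)"
            unfolding g_def using int[OF P0] by (rule Bochner_Integration.integral_diff)
          have nz: "norm (X n) \<noteq> 0" using Xn by simp
          have hJ: "J (\<mu> (\<theta> + X n)) = J (\<mu> \<theta>) + ((\<integral>x. \<Psi> (m n) x \<partial>\<nu> n) - (\<integral>x. \<Psi> (m n) x \<partial>\<mu>0))"
            using eJ[of n] unfolding m_def \<nu>_def \<mu>0_def by simp
          show ?thesis
            unfolding T_def Gapp \<Psi>0app g1 g2 D_def hJ using nz
            by (simp add: field_simps)
        qed
        have t1: "(\<lambda>n. T n (G n)) \<longlonglongrightarrow> 0"
        proof (rule Lim_null_comparison)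
          show "\<forall>\<^sub>F n in sequentially. norm (T n (G n)) \<le> C * norm (G n)" using C by simp
          show "(\<lambda>n. C * norm (G n)) \<longlonglongrightarrow> 0" using tendsto_mult_right_zero[OF Gnorm] .
        qed
        have t3: "(\<lambda>n. Lf (apply_bcontfun (G n)) (X n) / norm (X n)) \<longlonglongrightarrow> 0"
        proof (rule Lim_null_comparison)
          show "\<forall>\<^sub>F n in sequentially. norm (Lf (apply_bcontfun (G n)) (X n) / norm (X n)) \<le> norm (G n) * Kc"
          proof (rule always_eventually, rule allI)
            fix n
            have nz: "norm (X n) > 0" using Xn by simp
            show "norm (Lf (apply_bcontfun (G n)) (X n) / norm (X n)) \<le> norm (G n) * Kc"
              using Lbound[of "G n" "X n"] nz by (simp add: divide_le_eq mult.commute)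
          qed
          show "(\<lambda>n. norm (G n) * Kc) \<longlonglongrightarrow> 0" using tendsto_mult_left_zero[OF Gnorm] .
        qed
        have "(\<lambda>n. T n (G n) + T n \<Psi>0C + Lf (apply_bcontfun (G n)) (X n) / norm (X n)) \<longlonglongrightarrow> 0 + 0 + 0"
          by (intro tendsto_add t1 t3 Tlim)
        then show ?thesis unfolding o_def ident by simp
        qed
      qed
    qed
  qed
qed

end
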